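(* Let $k$ be a number field, $\mathcal G$ a finite group, $H$ a finite abelian group, $\mu:\mathcal G\to\mathrm{Aut}(H)$ an action, $k_1/k$ a Galois extension with group identified with $\mathcal G$, and $\tau\in H$. Then $k_1Z_{k_1/k,\mu,\tau}=k_1(\zeta_{o(\tau)})$.
   Context: $o(\tau)$ is the order of $\tau$ and $\zeta_t$ a primitive $t$-th root of unity. Let $\nu_{k,\tau}:\mathrm{Gal}(k(\zeta_{o(\tau)})/k)\to(\mathbb Z/o(\tau))^*$ be given by $g(\zeta_{o(\tau)})=\zeta_{o(\tau)}^{\nu_{k,\tau}(g)}$; $\tilde G_{k,\mu,\tau}=\{(g_1,g_2)\in\mathcal G\times\mathrm{Gal}(k(\zeta_{o(\tau)})/k):\mu(g_1)(\tau)=\tau^{\nu_{k,\tau}(g_2)}\}$. Identify $\mathrm{Gal}(k_1(\zeta_{o(\tau)})/k)$ with its image in $\mathcal G\times\mathrm{Gal}(k(\zeta_{o(\tau)})/k)$ via $g\mapsto(g|_{k_1},g|_{k(\zeta_{o(\tau)})})$, put $\tilde G_{k_1/k,\mu,\tau}=\tilde G_{k,\mu,\tau}\cap\mathrm{Gal}(k_1(\zeta_{o(\tau)})/k)$, and let $Z_{k_1/k,\mu,\tau}$ be its fixed field in $k_1(\zeta_{o(\tau)})$. *)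

theory Defs
  imports Complex_Main "HOL-Algebra.Algebra"
begin

text \<open>Fields are modelled concretely as subfields of the complex numbers
(every number field and every finite extension of it embeds in C).\<close>

definition subfield_C :: "complex set \<Rightarrow> bool" where
  "subfield_C K \<longleftrightarrow> 0 \<in> K \<and> 1 \<in> K \<and>
     (\<forall>x\<in>K. \<forall>y\<in>K. x + y \<in> K \<and> x - y \<in> K \<and> x * y \<in> K) \<and>
     (\<forall>x\<in>K. x \<noteq> 0 \<longrightarrow> inverse x \<in> K)"

definition fin_dim_over :: "complex set \<Rightarrow> complex set \<Rightarrow> bool" where
  "fin_dim_over K k \<longleftrightarrow> (\<exists>B. finite B \<and> B \<subseteq> K \<and>
     (\<forall>x\<in>K. \<exists>c. (\<forall>b\<in>B. c b \<in> k) \<and> x = (\<Sum>b\<in>B. c b * b)))"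

definition number_field :: "complex set \<Rightarrow> bool" where
  "number_field k \<longleftrightarrow> subfield_C k \<and> fin_dim_over k (of_rat ` \<rat>)"

definition gal_aut :: "complex set \<Rightarrow> complex set \<Rightarrow> (complex \<Rightarrow> complex) set" where
  "gal_aut K k = {\<sigma>. \<sigma> \<in> extensional K \<and> bij_betw \<sigma> K K \<and>
     (\<forall>x\<in>K. \<forall>y\<in>K. \<sigma> (x + y) = \<sigma> x + \<sigma> y \<and> \<sigma> (x * y) = \<sigma> x * \<sigma> y) \<and>
     (\<forall>x\<in>k. \<sigma> x = x)}"

definition GalGroup :: "complex set \<Rightarrow> complex set \<Rightarrow> (complex \<Rightarrow> complex) monoid" where
  "GalGroup K k = \<lparr>carrier = gal_aut K k, monoid.mult = (\<lambda>\<sigma> \<rho>. compose K \<sigma> \<rho>),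
                   monoid.one = (\<lambda>x\<in>K. x)\<rparr>"

definition fixed_field :: "complex set \<Rightarrow> (complex \<Rightarrow> complex) set \<Rightarrow> complex set" where
  "fixed_field K S = {x\<in>K. \<forall>\<sigma>\<in>S. \<sigma> x = x}"

text \<open>Finite Galois extension K/k (Artin: finite, and the fixed field of Aut(K/k) is k).\<close>
definition galois_ext :: "complex set \<Rightarrow> complex set \<Rightarrow> bool" where
  "galois_ext K k \<longleftrightarrow> subfield_C k \<and> subfield_C K \<and> k \<subseteq> K \<and> fin_dim_over K k \<and>
     fixed_field K (gal_aut K k) = k"

definition gen_field :: "complex set \<Rightarrow> complex set" where
  "gen_field S = \<Inter> {F. subfield_C F \<and> S \<subseteq> F}"

definition primitive_root :: "nat \<Rightarrow> complex \<Rightarrow> bool" where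
  "primitive_root t z \<longleftrightarrow> z ^ t = 1 \<and> (\<forall>m. 0 < m \<and> m < t \<longrightarrow> z ^ m \<noteq> 1)"

text \<open>The group tilde G_{k1/k,mu,tau}, viewed inside Gal(k1(zeta)/k); iota identifies
Gal(k1/k) with the abstract group G, and g restricted to k(zeta) is encoded by g zeta = zeta^n.\<close>
definition tildeG ::
  "complex set \<Rightarrow> complex set \<Rightarrow> ('g, 'c) monoid_scheme \<Rightarrow> ('h, 'd) monoid_scheme \<Rightarrow>
   ((complex \<Rightarrow> complex) \<Rightarrow> 'g) \<Rightarrow> ('g \<Rightarrow> 'h \<Rightarrow> 'h) \<Rightarrow> 'h \<Rightarrow> complex \<Rightarrow> (complex \<Rightarrow> complex) set" where
  "tildeG k k1 G H \<iota> \<mu> \<tau> \<zeta> =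
     {g \<in> gal_aut (gen_field (k1 \<union> {\<zeta>})) k.
        \<exists>n::nat. g \<zeta> = \<zeta> ^ n \<and> \<mu> (\<iota> (restrict g k1)) \<tau> = \<tau> [^]\<^bsub>H\<^esub> n}"

definition Zfield ::
  "complex set \<Rightarrow> complex set \<Rightarrow> ('g, 'c) monoid_scheme \<Rightarrow> ('h, 'd) monoid_scheme \<Rightarrow>
   ((complex \<Rightarrow> complex) \<Rightarrow> 'g) \<Rightarrow> ('g \<Rightarrow> 'h \<Rightarrow> 'h) \<Rightarrow> 'h \<Rightarrow> complex \<Rightarrow> complex set" where
  "Zfield k k1 G H \<iota> \<mu> \<tau> \<zeta> =
     fixed_field (gen_field (k1 \<union> {\<zeta>})) (tildeG k k1 G H \<iota> \<mu> \<tau> \<zeta>)"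

end

theory Submission
  imports Defs "HOL-Computational_Algebra.Polynomial"
begin


section \<open>Subfields\<close>

lemma sf_0: "subfield_C F \<Longrightarrow> 0 \<in> F" and sf_1: "subfield_C F \<Longrightarrow> 1 \<in> F"
  by (auto simp: subfield_C_def)

lemma sf_add: "subfield_C F \<Longrightarrow> x \<in> F \<Longrightarrow> y \<in> F \<Longrightarrow> x + y \<in> F"
  and sf_diff: "subfield_C F \<Longrightarrow> x \<in> F \<Longrightarrow> y \<in> F \<Longrightarrow> x - y \<in> F"
  and sf_mult: "subfield_C F \<Longrightarrow> x \<in> F \<Longrightarrow> y \<in> F \<Longrightarrow> x * y \<in> F"
  by (auto simp: subfield_C_def)

lemma sf_inverse: "subfield_C F \<Longrightarrow> x \<in> F \<Longrightarrow> inverse x \<in> F"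
  by (cases "x = 0") (auto simp: subfield_C_def)

lemma sf_uminus: "subfield_C F \<Longrightarrow> x \<in> F \<Longrightarrow> - x \<in> F"
  using sf_diff[of F 0 x] sf_0[of F] by simp

lemma sf_divide: "subfield_C F \<Longrightarrow> x \<in> F \<Longrightarrow> y \<in> F \<Longrightarrow> x / y \<in> F"
  by (simp add: divide_inverse sf_mult sf_inverse)

lemma sf_pow: "subfield_C F \<Longrightarrow> x \<in> F \<Longrightarrow> x ^ n \<in> F"
  by (induction n) (auto intro: sf_1 sf_mult)

lemma sf_of_nat: "subfield_C F \<Longrightarrow> of_nat n \<in> F"
  by (induction n) (auto intro: sf_0 sf_1 sf_add)

lemma sf_sum: "subfield_C F \<Longrightarrow> (\<And>a. a \<in> A \<Longrightarrow> u a \<in> F) \<Longrightarrow> sum u A \<in> F"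
  by (induction A rule: infinite_finite_induct) (auto intro: sf_0 sf_add)

lemma sf_prod: "subfield_C F \<Longrightarrow> (\<And>a. a \<in> A \<Longrightarrow> u a \<in> F) \<Longrightarrow> prod u A \<in> F"
  by (induction A rule: infinite_finite_induct) (auto intro: sf_1 sf_mult)

lemma gen_field_sf: "subfield_C (gen_field S)"
  unfolding subfield_C_def gen_field_def by (auto simp: subfield_C_def)

lemma gen_field_sub: "S \<subseteq> gen_field S"
  unfolding gen_field_def by auto

lemma gen_field_min: "subfield_C F \<Longrightarrow> S \<subseteq> F \<Longrightarrow> gen_field S \<subseteq> F"
  unfolding gen_field_def by auto

section \<open>Homomorphisms on subfields\<close>

definition fh :: "complex set \<Rightarrow> (complex \<Rightarrow> complex) \<Rightarrow> bool" where
  "fh F f \<longleftrightarrow> (\<forall>x\<in>F. \<forall>y\<in>F. f (x + y) = f x + f y \<and> f (x * y) = f x * f y) \<and> f 1 = 1"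

context
  fixes F f assumes sF: "subfield_C F" and hf: "fh F f"
begin

lemma fh_add: "x \<in> F \<Longrightarrow> y \<in> F \<Longrightarrow> f (x + y) = f x + f y"
  and fh_mult: "x \<in> F \<Longrightarrow> y \<in> F \<Longrightarrow> f (x * y) = f x * f y"
  and fh_1: "f 1 = 1"
  using hf by (auto simp: fh_def)

lemma fh_0: "f 0 = 0"
  using fh_add[of 0 0] sf_0[OF sF] by simp

lemma fh_uminus: "x \<in> F \<Longrightarrow> f (- x) = - f x"
  using fh_add[of x "-x"] sf_uminus[OF sF, of x] fh_0 by (simp add: add.commute eq_neg_iff_add_eq_0)

lemma fh_diff: "x \<in> F \<Longrightarrow> y \<in> F \<Longrightarrow> f (x - y) = f x - f y"
  using fh_add[of x "-y"] fh_uminus[of y] sf_uminus[OF sF, of y] by simp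

lemma fh_pow: "x \<in> F \<Longrightarrow> f (x ^ n) = f x ^ n"
  by (induction n) (auto simp: fh_1 fh_mult sf_pow[OF sF])

lemma fh_sum: "(\<And>a. a \<in> A \<Longrightarrow> u a \<in> F) \<Longrightarrow> f (sum u A) = (\<Sum>a\<in>A. f (u a))"
  by (induction A rule: infinite_finite_induct) (auto simp: fh_0 fh_add sf_sum[OF sF])

lemma fh_prod: "(\<And>a. a \<in> A \<Longrightarrow> u a \<in> F) \<Longrightarrow> f (prod u A) = (\<Prod>a\<in>A. f (u a))"
  by (induction A rule: infinite_finite_induct) (auto simp: fh_1 fh_mult sf_prod[OF sF])

lemma fh_inverse: "x \<in> F \<Longrightarrow> x \<noteq> 0 \<Longrightarrow> f (inverse x) = inverse (f x)"
  using fh_mult[of x "inverse x"] sf_inverse[OF sF, of x] fh_1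
  by (metis inverse_unique right_inverse)

end

lemma gal_aut_fh:
  assumes "\<sigma> \<in> gal_aut K k" "subfield_C k"
  shows "fh K \<sigma>"
  using assms sf_1[of k] unfolding gal_aut_def fh_def by auto

lemma gal_aut_bij: "\<sigma> \<in> gal_aut K k \<Longrightarrow> bij_betw \<sigma> K K"
  and gal_aut_ext: "\<sigma> \<in> gal_aut K k \<Longrightarrow> \<sigma> \<in> extensional K"
  and gal_aut_fix: "\<sigma> \<in> gal_aut K k \<Longrightarrow> x \<in> k \<Longrightarrow> \<sigma> x = x"
  unfolding gal_aut_def by auto

lemma gal_aut_in: "\<sigma> \<in> gal_aut K k \<Longrightarrow> x \<in> K \<Longrightarrow> \<sigma> x \<in> K"
  using gal_aut_bij bij_betwE by blast

lemma gal_aut_inj: "\<sigma> \<in> gal_aut K k \<Longrightarrow> inj_on \<sigma> K"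
  using gal_aut_bij bij_betw_def by blast

lemma fh_agree_gen:
  assumes "fh K f" "fh K g" "K = gen_field S" "\<And>x. x \<in> S \<Longrightarrow> f x = g x"
  shows "\<forall>x\<in>K. f x = g x"
proof -
  have sK: "subfield_C K" using assms(3) gen_field_sf by simp
  let ?E = "{x\<in>K. f x = g x}"
  have "subfield_C ?E"
    unfolding subfield_C_def
    using sK assms(1,2)
    by (auto simp: sf_0 sf_1 sf_add sf_diff sf_mult sf_inverse fh_0 fh_1 fh_add fh_diff fh_mult fh_inverse)
  moreover have "S \<subseteq> ?E" using assms(3,4) gen_field_sub by auto
  ultimately have "K \<subseteq> ?E" using assms(3) gen_field_min by blast
  then show ?thesis by auto
qed




lemma coeff_mult_in:
  assumes "subfield_C F" "\<And>j. coeff p j \<in> F" "\<And>j. coeff q j \<in> F"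
  shows "coeff (p * q) n \<in> F"
  unfolding coeff_mult using assms by (intro sf_sum sf_mult) auto

lemma coeff_lin_in:
  assumes "subfield_C F" "c \<in> F"
  shows "coeff [:c, 1:] j \<in> F"
  using assms by (cases j) (auto simp: sf_1 sf_0 coeff_pCons split: nat.splits)

lemma coeff_prod_lin_in:
  assumes "subfield_C F" "\<And>a. a \<in> A \<Longrightarrow> r a \<in> F"
  shows "coeff (\<Prod>a\<in>A. [:- r a, 1:]) j \<in> F"
  using assms(2)
proof (induction A arbitrary: j rule: infinite_finite_induct)
  case (infinite A) then show ?case using assms(1) by (cases j) (auto simp: sf_1 sf_0)
next
  case empty then show ?case using assms(1) by (cases j) (auto simp: sf_1 sf_0)
next
  case (insert x F')
  show ?case unfolding prod.insert[OF insert(1,2)]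
    by (rule coeff_mult_in[OF assms(1)]) (use insert assms(1) in \<open>auto intro: coeff_lin_in sf_uminus\<close>)
qed

lemma map_poly_mult_fh:
  assumes "subfield_C F" "fh F f" "\<And>j. coeff p j \<in> F" "\<And>j. coeff q j \<in> F"
  shows "map_poly f (p * q) = map_poly f p * map_poly f q"
proof (rule poly_eqI)
  fix n
  have f0: "f 0 = 0" using fh_0[OF assms(1,2)] .
  show "coeff (map_poly f (p * q)) n = coeff (map_poly f p * map_poly f q) n"
    unfolding coeff_map_poly[of f, OF f0] coeff_mult
    using assms by (simp add: fh_sum fh_mult sf_mult coeff_map_poly[of f, OF f0])
qed

lemma map_poly_lin:
  assumes "f 0 = 0" "f 1 = 1"
  shows "map_poly f [:c, 1:] = [:f c, 1:]"
  using assms by (intro poly_eqI) (auto simp: coeff_map_poly coeff_pCons split: nat.splits)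

lemma map_poly_prod_lin:
  assumes "subfield_C F" "fh F f" "\<And>a. a \<in> A \<Longrightarrow> r a \<in> F"
  shows "map_poly f (\<Prod>a\<in>A. [:- r a, 1:]) = (\<Prod>a\<in>A. [:- f (r a), 1:])"
  using assms(3)
proof (induction A rule: infinite_finite_induct)
  case (insert x A)
  have f0: "f 0 = 0" and f1: "f 1 = 1" using fh_0[OF assms(1,2)] fh_1[OF assms(1,2)] by auto
  have "map_poly f (\<Prod>a\<in>insert x A. [:- r a, 1:]) =
        map_poly f [:- r x, 1:] * map_poly f (\<Prod>a\<in>A. [:- r a, 1:])"
    unfolding prod.insert[OF insert(1,2)]
    by (rule map_poly_mult_fh[OF assms(1,2)])
       (use insert assms(1) in \<open>auto intro: coeff_lin_in sf_uminus coeff_prod_lin_in\<close>)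
  also have "\<dots> = [:- f (r x), 1:] * (\<Prod>a\<in>A. [:- f (r a), 1:])"
    using insert map_poly_lin[OF f0 f1] fh_uminus[OF assms(1,2)] by simp
  finally show ?case using insert by simp
qed (use assms in \<open>auto simp: fh_1[OF assms(1,2)]\<close>)

lemma poly_fh:
  assumes "subfield_C K" "fh K g" "\<And>j. g (coeff p j) = coeff p j" "\<And>j. coeff p j \<in> K" "y \<in> K"
  shows "g (poly p y) = poly p (g y)"
  unfolding poly_altdef using assms
  by (simp add: fh_sum fh_mult fh_pow sf_mult sf_pow)

lemma gal_aut_compose:
  assumes "\<sigma> \<in> gal_aut K k" "\<rho> \<in> gal_aut K k" "subfield_C K" "k \<subseteq> K"
  shows "compose K \<rho> \<sigma> \<in> gal_aut K k"
proof -
  have b: "bij_betw (compose K \<rho> \<sigma>) K K"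
    using assms gal_aut_bij bij_betw_compose by blast
  have "\<forall>x\<in>K. \<forall>y\<in>K. compose K \<rho> \<sigma> (x + y) = compose K \<rho> \<sigma> x + compose K \<rho> \<sigma> y \<and>
           compose K \<rho> \<sigma> (x * y) = compose K \<rho> \<sigma> x * compose K \<rho> \<sigma> y"
    using assms(1,2) gal_aut_in[OF assms(1)] sf_add[OF assms(3)] sf_mult[OF assms(3)]
    unfolding gal_aut_def compose_def by auto
  moreover have "\<forall>x\<in>k. compose K \<rho> \<sigma> x = x"
    using assms(1,2,4) unfolding gal_aut_def compose_def by auto
  ultimately show ?thesis using b unfolding gal_aut_def
    by (auto simp: compose_def)
qed

lemma gal_aut_id: "k \<subseteq> K \<Longrightarrow> subfield_C K \<Longrightarrow> (\<lambda>x\<in>K. x) \<in> gal_aut K k"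
  unfolding gal_aut_def by (auto simp: bij_betw_def inj_on_def sf_add sf_mult)




lemma finite_inj_self_image:
  assumes "finite R" "inj_on f R" "f ` R \<subseteq> R"
  shows "f ` R = R"
  using assms by (metis card_image card_subset_eq)

lemma normal_image:
  assumes sk: "subfield_C k" and sk1: "subfield_C k1" and sK: "subfield_C K"
    and kk1: "k \<subseteq> k1" and k1K: "k1 \<subseteq> K"
    and fin: "finite (gal_aut k1 k)" and fixk: "fixed_field k1 (gal_aut k1 k) = k"
    and g: "g \<in> gal_aut K k"
  shows "g ` k1 = k1"
proof -
  define \<Gamma> where "\<Gamma> = gal_aut k1 k"
  have key: "\<exists>R. finite R \<and> R \<subseteq> k1 \<and> x \<in> R \<and> g ` R \<subseteq> R" if x: "x \<in> k1" for x
  proof -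
    define R where "R = (\<lambda>\<sigma>. \<sigma> x) ` \<Gamma>"
    define p where "p = (\<Prod>r\<in>R. [:- r, 1:])"
    have finR: "finite R" using fin by (simp add: R_def \<Gamma>_def)
    have xR: "x \<in> R" using gal_aut_id[OF kk1 sk1] x unfolding R_def \<Gamma>_def
      by (metis (no_types, lifting) image_eqI restrict_apply')
    have Rk1: "R \<subseteq> k1" using x gal_aut_in unfolding R_def \<Gamma>_def by blast
    have ck1: "coeff p j \<in> k1" for j
      unfolding p_def by (rule coeff_prod_lin_in[OF sk1]) (use Rk1 in auto)
    have ck: "coeff p j \<in> k" for j
    proof -
      have "\<rho> (coeff p j) = coeff p j" if \<rho>: "\<rho> \<in> \<Gamma>" for \<rho>
      proof -
        have fh\<rho>: "fh k1 \<rho>" using gal_aut_fh[OF \<rho>[unfolded \<Gamma>_def] sk] .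
        have sub: "\<rho> ` R \<subseteq> R"
        proof
          fix z assume "z \<in> \<rho> ` R"
          then obtain \<sigma> where \<sigma>: "\<sigma> \<in> \<Gamma>" "z = \<rho> (\<sigma> x)" unfolding R_def by auto
          have "compose k1 \<rho> \<sigma> \<in> \<Gamma>"
            using gal_aut_compose[OF \<sigma>(1)[unfolded \<Gamma>_def] \<rho>[unfolded \<Gamma>_def] sk1 kk1]
            unfolding \<Gamma>_def .
          moreover have "compose k1 \<rho> \<sigma> x = z" using \<sigma>(2) x by (simp add: compose_def)
          ultimately show "z \<in> R" unfolding R_def by force
        qed
        have inj: "inj_on \<rho> R" using gal_aut_inj[OF \<rho>[unfolded \<Gamma>_def]] Rk1 inj_on_subset by blast
        have img: "\<rho> ` R = R" using finite_inj_self_image[OF finR inj sub] .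
        have "\<rho> (coeff p j) = coeff (map_poly \<rho> p) j"
          using coeff_map_poly[of \<rho>, OF fh_0[OF sk1 fh\<rho>]] by simp
        also have "map_poly \<rho> p = (\<Prod>r\<in>R. [:- \<rho> r, 1:])"
          unfolding p_def using map_poly_prod_lin[OF sk1 fh\<rho>, of R "\<lambda>r. r"] Rk1 by auto
        also have "\<dots> = (\<Prod>r\<in>\<rho> ` R. [:- r, 1:])"
          using prod.reindex[OF inj, of "\<lambda>r. [:- r, 1:]"] by (simp add: comp_def)
        also have "\<dots> = p" using img p_def by simp
        finally show ?thesis .
      qed
      then have "coeff p j \<in> fixed_field k1 \<Gamma>" using ck1 unfolding fixed_field_def by auto
      then show ?thesis using fixk \<Gamma>_def by simp
    qed
    have roots: "poly p z = 0 \<longleftrightarrow> z \<in> R" for z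
      unfolding p_def poly_prod using finR by (auto simp: prod_zero_iff)
    have fhg: "fh K g" using gal_aut_fh[OF g sk] .
    have "g ` R \<subseteq> R"
    proof
      fix z assume "z \<in> g ` R"
      then obtain r where r: "r \<in> R" "z = g r" by auto
      have rK: "r \<in> K" using r Rk1 k1K by auto
      have "poly p (g r) = g (poly p r)"
        by (rule poly_fh[OF sK fhg, symmetric])
           (use ck ck1 k1K gal_aut_fix[OF g] rK in auto)
      also have "\<dots> = 0" using roots[of r] r fh_0[OF sK fhg] by simp
      finally show "z \<in> R" using roots r by simp
    qed
    then show ?thesis using finR Rk1 xR by blast
  qed
  show ?thesis
  proof
    show "g ` k1 \<subseteq> k1" using key by blast
    show "k1 \<subseteq> g ` k1"
    proof
      fix x assume x: "x \<in> k1"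
      obtain R where R: "finite R" "R \<subseteq> k1" "x \<in> R" "g ` R \<subseteq> R" using key[OF x] by blast
      have "inj_on g R" using gal_aut_inj[OF g] R(2) k1K inj_on_subset by blast
      then have "g ` R = R" using finite_inj_self_image R by blast
      then show "x \<in> g ` k1" using R by blast
    qed
  qed
qed

lemma restrict_gal_aut:
  assumes sk1: "subfield_C k1" and kk1: "k \<subseteq> k1" and k1K: "k1 \<subseteq> K"
    and g: "g \<in> gal_aut K k" and img: "g ` k1 = k1"
  shows "restrict g k1 \<in> gal_aut k1 k"
proof -
  have "inj_on g k1" using gal_aut_inj[OF g] k1K inj_on_subset by blast
  then have "bij_betw (restrict g k1) k1 k1" using img
    by (simp add: bij_betw_def inj_on_restrict_eq image_restrict_eq)
  moreover have "\<forall>x\<in>k1. \<forall>y\<in>k1. restrict g k1 (x + y) = restrict g k1 x + restrict g k1 y \<and>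
      restrict g k1 (x * y) = restrict g k1 x * restrict g k1 y"
    using g k1K sf_add[OF sk1] sf_mult[OF sk1] unfolding gal_aut_def by (auto simp: subset_iff)
  moreover have "\<forall>x\<in>k. restrict g k1 x = x" using g kk1 unfolding gal_aut_def by auto
  ultimately show ?thesis unfolding gal_aut_def by auto
qed




lemma sf_cancel_scalar:
  assumes "subfield_C E" "a \<in> E" "a \<noteq> 0" "a * y \<in> E"
  shows "y \<in> E"
proof -
  have "inverse a * (a * y) \<in> E" using assms sf_mult[OF assms(1) sf_inverse[OF assms(1)]] by blast
  moreover have "inverse a * (a * y) = y" using assms(3) by (simp add: mult.assoc[symmetric])
  ultimately show ?thesis by simp
qed

lemma avoid_subfields:
  assumes sk1: "subfield_C k1" and fin: "finite \<E>"
    and hE: "\<And>E. E \<in> \<E> \<Longrightarrow> subfield_C E \<and> E \<subseteq> k1 \<and> E \<noteq> k1"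
  shows "\<exists>x\<in>k1. \<forall>E\<in>\<E>. x \<notin> E"
  using fin hE
proof (induction \<E> rule: finite_induct)
  case empty then show ?case using sf_0[OF sk1] by blast
next
  case (insert E \<E>)
  obtain x where x: "x \<in> k1" "\<forall>E'\<in>\<E>. x \<notin> E'" using insert by blast
  show ?case
  proof (cases "x \<in> E")
    case False then show ?thesis using x by blast
  next
    case True
    have sE: "subfield_C E" "E \<subseteq> k1" "E \<noteq> k1" using insert(4) by auto
    then obtain y where y: "y \<in> k1" "y \<notin> E" by blast
    define N where "N = card \<E>"
    have "\<exists>t\<in>{1..N+1}. \<forall>E'\<in>\<E>. x + of_nat t * y \<notin> E'"
    proof (rule ccontr)
      assume "\<not> ?thesis"
      then have "\<forall>t\<in>{1..N+1}. \<exists>E'\<in>\<E>. x + of_nat t * y \<in> E'" by blast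
      then obtain c where c: "\<And>t. t \<in> {1..N+1} \<Longrightarrow> c t \<in> \<E> \<and> x + of_nat t * y \<in> c t"
        by metis
      have "inj_on c {1..N+1}"
      proof (rule inj_onI, rule ccontr)
        fix t t' assume tt: "t \<in> {1..N+1}" "t' \<in> {1..N+1}" "c t = c t'" "t \<noteq> t'"
        define E' where "E' = c t"
        have E': "E' \<in> \<E>" "x + of_nat t * y \<in> E'" "x + of_nat t' * y \<in> E'"
          using c[OF tt(1)] c[OF tt(2)] tt(3) E'_def by auto
        have sE': "subfield_C E'" using insert(4) E' by auto
        have "(x + of_nat t * y) - (x + of_nat t' * y) \<in> E'" using E' sf_diff[OF sE'] by blast
        then have "(of_nat t - of_nat t') * y \<in> E'" by (simp add: algebra_simps)
        moreover have "(of_nat t - of_nat t' :: complex) \<in> E'" using sf_diff[OF sE'] sf_of_nat[OF sE'] by blast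
        moreover have "(of_nat t - of_nat t' :: complex) \<noteq> 0" using tt(4) by simp
        ultimately have "y \<in> E'" using sf_cancel_scalar[OF sE'] by blast
        then have "of_nat t * y \<in> E'" using sf_mult[OF sE'] sf_of_nat[OF sE'] by blast
        then have "(x + of_nat t * y) - of_nat t * y \<in> E'" using E' sf_diff[OF sE'] by blast
        then show False using x E' by simp
      qed
      then have "card {1..N+1} \<le> card \<E>"
        using card_inj_on_le[of c "{1..N+1}" \<E>] c insert(1) by blast
      then show False unfolding N_def by simp
    qed
    then obtain t where t: "t \<in> {1..N+1}" "\<forall>E'\<in>\<E>. x + of_nat t * y \<notin> E'" by blast
    have "x + of_nat t * y \<notin> E"
    proof
      assume "x + of_nat t * y \<in> E"
      then have "(x + of_nat t * y) - x \<in> E" using True sf_diff[OF sE(1)] by blast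
      then have "of_nat t * y \<in> E" by simp
      then have "y \<in> E" using sf_cancel_scalar[OF sE(1) sf_of_nat[OF sE(1)]] t(1) by (metis Suc_le_eq atLeastAtMost_iff of_nat_0_eq_iff not_less_eq_eq One_nat_def le_zero_eq)
      then show False using y by simp
    qed
    moreover have "x + of_nat t * y \<in> k1"
      using x y sf_add[OF sk1] sf_mult[OF sk1] sf_of_nat[OF sk1] by blast
    ultimately show ?thesis using t by blast
  qed
qed




locale mt =
  fixes k k1 :: "complex set"
    and G :: "('g, 'c) monoid_scheme" and H :: "('h, 'd) monoid_scheme"
    and \<mu> :: "'g \<Rightarrow> 'h \<Rightarrow> 'h" and \<iota> :: "(complex \<Rightarrow> complex) \<Rightarrow> 'g"
    and \<tau> :: 'h and \<zeta> :: complex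
  assumes nf: "number_field k"
    and grG: "group G" and finG: "finite (carrier G)"
    and cgH: "comm_group H" and finH: "finite (carrier H)"
    and hom\<mu>: "\<mu> \<in> hom G (AutoGroup H)"
    and gal: "galois_ext k1 k"
    and iso\<iota>: "\<iota> \<in> iso (GalGroup k1 k) G"
    and \<tau>H: "\<tau> \<in> carrier H"
    and prim: "primitive_root (group.ord H \<tau>) \<zeta>"
begin

abbreviation "K \<equiv> gen_field (k1 \<union> {\<zeta>})"
abbreviation "T \<equiv> tildeG k k1 G H \<iota> \<mu> \<tau> \<zeta>"
abbreviation "idK \<equiv> (\<lambda>x\<in>K. x)"

lemma grH: "group H" using cgH comm_group.axioms(2) by blast

lemma sk: "subfield_C k" using nf number_field_def by blast
lemma sk1: "subfield_C k1" and kk1: "k \<subseteq> k1" and fixk: "fixed_field k1 (gal_aut k1 k) = k"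
  using gal galois_ext_def by auto
lemma sK: "subfield_C K" by (rule gen_field_sf)
lemma k1K: "k1 \<subseteq> K" and zK: "\<zeta> \<in> K" using gen_field_sub[of "k1 \<union> {\<zeta>}"] by auto
lemma kK: "k \<subseteq> K" using kk1 k1K by auto

lemma carrier_Gal: "carrier (GalGroup k1 k) = gal_aut k1 k"
  by (simp add: GalGroup_def)

lemma fin\<Gamma>: "finite (gal_aut k1 k)"
proof -
  have "bij_betw \<iota> (gal_aut k1 k) (carrier G)" using iso\<iota> carrier_Gal by (simp add: iso_def)
  then show ?thesis using finG bij_betw_finite by blast
qed

abbreviation "od \<equiv> group.ord H \<tau>"

lemma o_pos: "od > 0"
  using group.ord_ge_1[OF grH finH \<tau>H] by simp

lemma zeta_o: "\<zeta> ^ od = 1" using prim primitive_root_def by blast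

lemma zeta_pow_mod: "\<zeta> ^ n = \<zeta> ^ (n mod od)"
proof -
  have "\<zeta> ^ n = \<zeta> ^ (od * (n div od) + n mod od)" by (metis div_mult_mod_eq mult.commute)
  also have "\<dots> = (\<zeta> ^ od) ^ (n div od) * \<zeta> ^ (n mod od)" by (simp only: power_add power_mult)
  also have "\<dots> = \<zeta> ^ (n mod od)" by (simp add: zeta_o)
  finally show ?thesis .
qed

lemma norm: assumes "g \<in> gal_aut K k" shows "g ` k1 = k1" "restrict g k1 \<in> gal_aut k1 k"
proof -
  show img: "g ` k1 = k1" by (rule normal_image[OF sk sk1 sK kk1 k1K fin\<Gamma> fixk assms])
  show "restrict g k1 \<in> gal_aut k1 k" by (rule restrict_gal_aut[OF sk1 kk1 k1K assms img])
qed

lemma iota_mult: "a \<in> gal_aut k1 k \<Longrightarrow> b \<in> gal_aut k1 k \<Longrightarrow> \<iota> (compose k1 a b) = \<iota> a \<otimes>\<^bsub>G\<^esub> \<iota> b"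
  using hom_mult[OF iso_imp_homomorphism[OF iso\<iota>], of a b] by (simp add: GalGroup_def)

lemma iota_in: "a \<in> gal_aut k1 k \<Longrightarrow> \<iota> a \<in> carrier G"
  using hom_in_carrier[OF iso_imp_homomorphism[OF iso\<iota>]] carrier_Gal by blast

lemma mu_auto: "a \<in> carrier G \<Longrightarrow> \<mu> a \<in> auto H"
  using hom_in_carrier[OF hom\<mu>] by (simp add: AutoGroup_def BijGroup_def)

lemma mu_mult: assumes "a \<in> carrier G" "b \<in> carrier G" "x \<in> carrier H"
  shows "\<mu> (a \<otimes>\<^bsub>G\<^esub> b) x = \<mu> a (\<mu> b x)"
proof -
  have "\<mu> (a \<otimes>\<^bsub>G\<^esub> b) = \<mu> a \<otimes>\<^bsub>AutoGroup H\<^esub> \<mu> b" using hom_mult[OF hom\<mu> assms(1,2)] .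
  also have "\<dots> = compose (carrier H) (\<mu> a) (\<mu> b)"
    using mu_auto[OF assms(1)] mu_auto[OF assms(2)] by (simp add: AutoGroup_def BijGroup_def auto_def)
  finally show ?thesis using assms(3) by (simp add: compose_def)
qed

lemma mu_pow: assumes "a \<in> carrier G" "x \<in> carrier H"
  shows "\<mu> a (x [^]\<^bsub>H\<^esub> (n::nat)) = (\<mu> a x) [^]\<^bsub>H\<^esub> n"
  using hom_nat_pow[of "\<mu> a" H H x n] mu_auto[OF assms(1)] assms(2) grH by (simp add: auto_def)

lemma mu_closed: "a \<in> carrier G \<Longrightarrow> x \<in> carrier H \<Longrightarrow> \<mu> a x \<in> carrier H"
  using mu_auto unfolding auto_def hom_def by auto

lemma tau1: "\<tau> [^]\<^bsub>H\<^esub> (1::nat) = \<tau>"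
  using group.is_monoid[OF grH] \<tau>H by (simp add: One_nat_def monoid.nat_pow_Suc monoid.nat_pow_0 monoid.l_one)

lemma T_sub: "T \<subseteq> gal_aut K k" unfolding tildeG_def by auto

lemma T_closed: assumes f: "f \<in> T" and g: "g \<in> T" shows "compose K f g \<in> T"
proof -
  obtain m where m: "f \<zeta> = \<zeta> ^ m" "\<mu> (\<iota> (restrict f k1)) \<tau> = \<tau> [^]\<^bsub>H\<^esub> m"
    and fG: "f \<in> gal_aut K k" using f unfolding tildeG_def by auto
  obtain n where n: "g \<zeta> = \<zeta> ^ n" "\<mu> (\<iota> (restrict g k1)) \<tau> = \<tau> [^]\<^bsub>H\<^esub> n"
    and gG: "g \<in> gal_aut K k" using g unfolding tildeG_def by auto
  have cG: "compose K f g \<in> gal_aut K k" by (rule gal_aut_compose[OF gG fG sK kK])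
  have "compose K f g \<zeta> = f (\<zeta> ^ n)" using zK n by (simp add: compose_def)
  also have "\<dots> = (f \<zeta>) ^ n" using fh_pow[OF sK gal_aut_fh[OF fG sk] zK] .
  also have "\<dots> = \<zeta> ^ (n * m)" using m by (simp add: power_mult mult.commute)
  finally have c1: "compose K f g \<zeta> = \<zeta> ^ (n * m)" .
  have rf: "restrict f k1 \<in> gal_aut k1 k" and rg: "restrict g k1 \<in> gal_aut k1 k"
    using norm fG gG by auto
  have gk1: "g x \<in> k1" if "x \<in> k1" for x using norm(1)[OF gG] that by blast
  have "restrict (compose K f g) k1 = compose k1 (restrict f k1) (restrict g k1)"
    using k1K gk1 by (auto simp: compose_def restrict_def fun_eq_iff)
  then have "\<mu> (\<iota> (restrict (compose K f g) k1)) \<tau> = \<mu> (\<iota> (restrict f k1)) (\<mu> (\<iota> (restrict g k1)) \<tau>)"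
    using iota_mult[OF rf rg] mu_mult[OF iota_in[OF rf] iota_in[OF rg] \<tau>H] by simp
  also have "\<dots> = (\<tau> [^]\<^bsub>H\<^esub> m) [^]\<^bsub>H\<^esub> n" using n m mu_pow[OF iota_in[OF rf] \<tau>H] by simp
  also have "\<dots> = \<tau> [^]\<^bsub>H\<^esub> (n * m)"
    using monoid.nat_pow_pow[OF group.is_monoid[OF grH] \<tau>H] by (simp add: mult.commute)
  finally show ?thesis using cG c1 unfolding tildeG_def by blast
qed

lemma id_Gal: "(\<lambda>x\<in>k1. x) \<in> gal_aut k1 k" by (rule gal_aut_id[OF kk1 sk1])

lemma iota_one: "\<iota> (\<lambda>x\<in>k1. x) = \<one>\<^bsub>G\<^esub>"
proof -
  have "compose k1 (\<lambda>x\<in>k1. x) (\<lambda>x\<in>k1. x) = (\<lambda>x\<in>k1. x)" by (auto simp: compose_def fun_eq_iff)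
  then have "\<iota> (\<lambda>x\<in>k1. x) \<otimes>\<^bsub>G\<^esub> \<iota> (\<lambda>x\<in>k1. x) = \<iota> (\<lambda>x\<in>k1. x)"
    using iota_mult[OF id_Gal id_Gal] by simp
  then show ?thesis using group.l_cancel_one[OF grG iota_in[OF id_Gal] iota_in[OF id_Gal]] by simp
qed

lemma mu_one: "\<mu> \<one>\<^bsub>G\<^esub> \<tau> = \<tau>"
proof -
  have one: "\<one>\<^bsub>G\<^esub> \<in> carrier G" using group.is_monoid[OF grG] monoid.one_closed by blast
  have "\<mu> \<one>\<^bsub>G\<^esub> (\<mu> \<one>\<^bsub>G\<^esub> \<tau>) = \<mu> \<one>\<^bsub>G\<^esub> \<tau>"
    using mu_mult[OF one one \<tau>H] group.is_monoid[OF grG] monoid.l_one[OF _ one] by metis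
  moreover have "inj_on (\<mu> \<one>\<^bsub>G\<^esub>) (carrier H)"
    using mu_auto[OF one] by (auto simp: auto_def Bij_def bij_betw_def)
  ultimately show ?thesis using mu_closed[OF one \<tau>H] \<tau>H by (meson inj_onD)
qed

lemma id_T: "idK \<in> T"
proof -
  have "idK \<in> gal_aut K k" by (rule gal_aut_id[OF kK sK])
  moreover have "restrict idK k1 = (\<lambda>x\<in>k1. x)" using k1K by (auto simp: fun_eq_iff)
  moreover have "idK \<zeta> = \<zeta> ^ 1" using zK by simp
  ultimately show ?thesis unfolding tildeG_def
    using iota_one mu_one tau1 by fastforce
qed

lemma agree:
  assumes "f \<in> gal_aut K k" "g \<in> gal_aut K k" "\<forall>x\<in>k1. f x = g x" "f \<zeta> = g \<zeta>"
  shows "f = g"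
proof -
  have "\<forall>x\<in>K. f x = g x"
    by (rule fh_agree_gen[OF gal_aut_fh[OF assms(1) sk] gal_aut_fh[OF assms(2) sk] refl])
       (use assms(3,4) in auto)
  then show ?thesis using gal_aut_ext[OF assms(1)] gal_aut_ext[OF assms(2)] extensionalityI by blast
qed

lemma finT: "finite T"
proof -
  let ?f = "\<lambda>g. (restrict g k1, g \<zeta>)"
  have "inj_on ?f T"
  proof (rule inj_onI)
    fix a b assume "a \<in> T" "b \<in> T" "?f a = ?f b"
    then show "a = b" using agree T_sub by (metis (no_types, lifting) prod.inject restrict_apply' subset_iff)
  qed
  moreover have "?f ` T \<subseteq> gal_aut k1 k \<times> ((\<lambda>j. \<zeta> ^ j) ` {..<od})"
  proof
    fix p assume "p \<in> ?f ` T"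
    then obtain g where g: "g \<in> T" "p = ?f g" by auto
    obtain n where n: "g \<zeta> = \<zeta> ^ n" using g unfolding tildeG_def by auto
    have "g \<zeta> = \<zeta> ^ (n mod od)" using n zeta_pow_mod by simp
    moreover have "n mod od < od" using o_pos by simp
    ultimately show "p \<in> gal_aut k1 k \<times> ((\<lambda>j. \<zeta> ^ j) ` {..<od})"
      using g norm T_sub by auto
  qed
  moreover have "finite (gal_aut k1 k \<times> ((\<lambda>j. \<zeta> ^ j) ` {..<od}))" using fin\<Gamma> by simp
  ultimately show ?thesis using finite_imageD finite_subset by blast
qed

lemma kernel:
  assumes h: "h \<in> T" and fix1: "\<forall>x\<in>k1. h x = x"
  shows "h = idK"
proof -
  obtain n where n: "h \<zeta> = \<zeta> ^ n" "\<mu> (\<iota> (restrict h k1)) \<tau> = \<tau> [^]\<^bsub>H\<^esub> n"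
    and hG: "h \<in> gal_aut K k" using h unfolding tildeG_def by auto
  have "restrict h k1 = (\<lambda>x\<in>k1. x)" using fix1 by (auto simp: fun_eq_iff)
  then have "\<tau> [^]\<^bsub>H\<^esub> n = \<tau>"
    using n iota_one mu_one by simp
  then have "\<tau> [^]\<^bsub>H\<^esub> n = \<tau> [^]\<^bsub>H\<^esub> (1::nat)" by (metis tau1)
  then have "\<tau> [^]\<^bsub>H\<^esub> (int n) = \<tau> [^]\<^bsub>H\<^esub> (int 1)" by (simp only: int_pow_int)
  then have dv: "int od dvd (int 1 - int n)" using group.int_pow_eq[OF grH \<tau>H] by blast
  have "\<zeta> ^ n = \<zeta>"
  proof (cases "n = 0")
    case True
    then have "int od dvd 1" using dv by simp
    then have "od = 1" by simp
    then show ?thesis using zeta_o True by simp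
  next
    case False
    then have "int od dvd int (n - 1)" using dv by (metis dvd_minus_iff minus_diff_eq of_nat_1 of_nat_diff Suc_leI neq0_conv One_nat_def)
    then have "od dvd (n - 1)" by simp
    then obtain q where q: "n - 1 = od * q" by blast
    have "n = 1 + od * q" using q False by simp
    then have "\<zeta> ^ n = \<zeta> ^ (1 + od * q)" by simp
    then show ?thesis by (simp add: power_add power_mult zeta_o)
  qed
  then have "h \<zeta> = idK \<zeta>" using n zK by simp
  moreover have "\<forall>x\<in>k1. h x = idK x" using fix1 k1K by auto
  ultimately show ?thesis using agree[OF hG gal_aut_id[OF kK sK]] by blast
qed

lemma theta: "\<exists>\<theta>\<in>k1. \<forall>h\<in>T - {idK}. h \<theta> \<noteq> \<theta>"
proof -
  let ?E = "(\<lambda>h. {x\<in>k1. h x = x}) ` (T - {idK})"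
  have "\<exists>x\<in>k1. \<forall>E\<in>?E. x \<notin> E"
  proof (rule avoid_subfields[OF sk1])
    show "finite ?E" using finT by simp
    fix E assume "E \<in> ?E"
    then obtain h where h: "h \<in> T" "h \<noteq> idK" "E = {x\<in>k1. h x = x}" by auto
    have hG: "h \<in> gal_aut K k" using h T_sub by auto
    have fhk1: "fh k1 h"
      using gal_aut_fh[OF hG sk] k1K unfolding fh_def by auto
    have "subfield_C E" unfolding h(3) subfield_C_def using sk1 fhk1
      by (auto simp: sf_0 sf_1 sf_add sf_diff sf_mult sf_inverse fh_0 fh_1 fh_add fh_diff fh_mult fh_inverse)
    moreover have "E \<noteq> k1" using kernel[OF h(1)] h(2,3) by auto
    ultimately show "subfield_C E \<and> E \<subseteq> k1 \<and> E \<noteq> k1" using h(3) by auto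
  qed
  then show ?thesis by auto
qed

lemma Tr_in: assumes y: "y \<in> K" shows "(\<Sum>g\<in>T. g y) \<in> Zfield k k1 G H \<iota> \<mu> \<tau> \<zeta>"
proof -
  have inK: "(\<Sum>g\<in>T. g y) \<in> K" using T_sub gal_aut_in y by (intro sf_sum[OF sK]) blast
  have "f (\<Sum>g\<in>T. g y) = (\<Sum>g\<in>T. g y)" if f: "f \<in> T" for f
  proof -
    have fG: "f \<in> gal_aut K k" using f T_sub by auto
    have inj: "inj_on (compose K f) T"
    proof (rule inj_onI)
      fix a b assume ab: "a \<in> T" "b \<in> T" "compose K f a = compose K f b"
      have "\<forall>x\<in>K. a x = b x"
      proof
        fix x assume x: "x \<in> K"
        have aG: "a \<in> gal_aut K k" and bG: "b \<in> gal_aut K k" using ab(1,2) T_sub by auto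
        have "compose K f a x = compose K f b x" using ab(3) by simp
        then have "f (a x) = f (b x)" using x by (simp add: compose_def)
        moreover have "a x \<in> K" "b x \<in> K" using gal_aut_in[OF aG x] gal_aut_in[OF bG x] .
        ultimately show "a x = b x"
          using gal_aut_inj[OF fG] by (simp add: inj_on_def)
      qed
      moreover have "a \<in> extensional K" "b \<in> extensional K"
        using gal_aut_ext ab(1,2) T_sub by blast+
      ultimately show "a = b" using extensionalityI by metis
    qed
    have img: "compose K f ` T = T"
      by (rule finite_inj_self_image[OF finT inj]) (use T_closed f in auto)
    have "f (\<Sum>g\<in>T. g y) = (\<Sum>g\<in>T. f (g y))"
      by (rule fh_sum[OF sK gal_aut_fh[OF fG sk]]) (use T_sub gal_aut_in y in blast)
    also have "\<dots> = (\<Sum>g\<in>T. compose K f g y)" using y by (simp add: compose_def)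
    also have "\<dots> = (\<Sum>g\<in>compose K f ` T. g y)" using sum.reindex[OF inj, of "\<lambda>g. g y"] by simp
    also have "\<dots> = (\<Sum>g\<in>T. g y)" using img by simp
    finally show ?thesis .
  qed
  then show ?thesis using inK unfolding Zfield_def fixed_field_def by blast
qed

end



context mt begin

lemma zeta_in: "\<zeta> \<in> gen_field (k1 \<union> Zfield k k1 G H \<iota> \<mu> \<tau> \<zeta>)"
proof -
  define F where "F = gen_field (k1 \<union> Zfield k k1 G H \<iota> \<mu> \<tau> \<zeta>)"
  have sF: "subfield_C F" unfolding F_def by (rule gen_field_sf)
  have k1F: "k1 \<subseteq> F" and ZF: "Zfield k k1 G H \<iota> \<mu> \<tau> \<zeta> \<subseteq> F"
    using gen_field_sub[of "k1 \<union> Zfield k k1 G H \<iota> \<mu> \<tau> \<zeta>"] unfolding F_def by auto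
  obtain \<theta> where \<theta>: "\<theta> \<in> k1" "\<forall>h\<in>T - {idK}. h \<theta> \<noteq> \<theta>" using theta by blast
  have \<theta>K: "\<theta> \<in> K" using \<theta> k1K by auto
  have gk1: "g \<theta> \<in> k1" if "g \<in> T" for g using norm(1)[of g] T_sub that \<theta>(1) by blast
  define T' where "T' = T - {idK}"
  have finT': "finite T'" using finT T'_def by simp
  define c where "c = (\<Prod>h\<in>T'. (\<theta> - h \<theta>))"
  have c0: "c \<noteq> 0" unfolding c_def using finT' \<theta>(2) T'_def by (auto simp: prod_zero_iff) (metis DiffI singletonD)
  have ck1: "c \<in> k1" unfolding c_def using gk1 \<theta>(1) T'_def by (intro sf_prod[OF sk1] sf_diff[OF sk1]) auto
  define L where "L = smult (inverse c) (\<Prod>h\<in>T'. [:- h \<theta>, 1:])"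
  have cL: "coeff L j \<in> k1" for j
    unfolding L_def coeff_smult
    by (rule sf_mult[OF sk1 sf_inverse[OF sk1 ck1] coeff_prod_lin_in[OF sk1]])
       (use gk1 T'_def in auto)
  have pL: "poly L z = inverse c * (\<Prod>h\<in>T'. (z - h \<theta>))" for z
    unfolding L_def by (simp add: poly_prod)
  have p1: "poly L \<theta> = 1" using pL[of \<theta>] c0 unfolding c_def by simp
  have p0: "poly L (g \<theta>) = 0" if "g \<in> T'" for g
    using pL[of "g \<theta>"] finT' that by (auto simp: prod_zero_iff)
  have "(\<Sum>g\<in>T. poly L (g \<theta>) * g \<zeta>) = poly L (idK \<theta>) * idK \<zeta> + (\<Sum>g\<in>T'. poly L (g \<theta>) * g \<zeta>)"
    unfolding T'_def using sum.remove[OF finT id_T] by blast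
  also have "\<dots> = \<zeta>" using p1 p0 \<theta>K zK by simp
  finally have eq1: "\<zeta> = (\<Sum>g\<in>T. poly L (g \<theta>) * g \<zeta>)" by simp
  have eq2: "poly L (g \<theta>) * g \<zeta> = (\<Sum>j\<le>degree L. coeff L j * g (\<theta> ^ j * \<zeta>))" if g: "g \<in> T" for g
  proof -
    have gG: "g \<in> gal_aut K k" using g T_sub by auto
    have fhg: "fh K g" using gal_aut_fh[OF gG sk] .
    have "g (\<theta> ^ j * \<zeta>) = g \<theta> ^ j * g \<zeta>" for j
      using fh_mult[OF sK fhg sf_pow[OF sK \<theta>K] zK] fh_pow[OF sK fhg \<theta>K] by simp
    then show ?thesis unfolding poly_altdef by (simp add: sum_distrib_right mult.assoc)
  qed
  have "(\<Sum>g\<in>T. poly L (g \<theta>) * g \<zeta>) = (\<Sum>g\<in>T. \<Sum>j\<le>degree L. coeff L j * g (\<theta> ^ j * \<zeta>))"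
    by (rule sum.cong[OF refl eq2])
  then have "\<zeta> = (\<Sum>g\<in>T. \<Sum>j\<le>degree L. coeff L j * g (\<theta> ^ j * \<zeta>))" using eq1 by metis
  also have "\<dots> = (\<Sum>j\<le>degree L. \<Sum>g\<in>T. coeff L j * g (\<theta> ^ j * \<zeta>))"
    by (rule sum.swap)
  also have "\<dots> = (\<Sum>j\<le>degree L. coeff L j * (\<Sum>g\<in>T. g (\<theta> ^ j * \<zeta>)))"
    by (simp only: sum_distrib_left)
  finally have eq: "\<zeta> = (\<Sum>j\<le>degree L. coeff L j * (\<Sum>g\<in>T. g (\<theta> ^ j * \<zeta>)))" .
  have "(\<Sum>j\<le>degree L. coeff L j * (\<Sum>g\<in>T. g (\<theta> ^ j * \<zeta>))) \<in> F"
  proof (rule sf_sum[OF sF], rule sf_mult[OF sF])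
    fix j
    show "coeff L j \<in> F" using cL k1F by auto
    have "\<theta> ^ j * \<zeta> \<in> K" using sf_mult[OF sK sf_pow[OF sK \<theta>K] zK] .
    then show "(\<Sum>g\<in>T. g (\<theta> ^ j * \<zeta>)) \<in> F" using Tr_in ZF by blast
  qed
  then show ?thesis using eq F_def by simp
qed

end

theorem mainTheorem15:
  fixes k k1 :: "complex set"
    and G :: "('g, 'c) monoid_scheme" and H :: "('h, 'd) monoid_scheme"
    and \<mu> :: "'g \<Rightarrow> 'h \<Rightarrow> 'h" and \<iota> :: "(complex \<Rightarrow> complex) \<Rightarrow> 'g"
    and \<tau> :: 'h and \<zeta> :: complex
  assumes "number_field k"
    and "group G" and "finite (carrier G)"
    and "comm_group H" and "finite (carrier H)"
    and "\<mu> \<in> hom G (AutoGroup H)"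
    and "galois_ext k1 k"
    and "\<iota> \<in> iso (GalGroup k1 k) G"
    and "\<tau> \<in> carrier H"
    and "primitive_root (group.ord H \<tau>) \<zeta>"
  shows "gen_field (k1 \<union> Zfield k k1 G H \<iota> \<mu> \<tau> \<zeta>) = gen_field (k1 \<union> {\<zeta>})"
proof -
  interpret mt k k1 G H \<mu> \<iota> \<tau> \<zeta> using assms by (simp add: mt_def)
  show ?thesis
  proof
    have "Zfield k k1 G H \<iota> \<mu> \<tau> \<zeta> \<subseteq> K" unfolding Zfield_def fixed_field_def by auto
    then have "k1 \<union> Zfield k k1 G H \<iota> \<mu> \<tau> \<zeta> \<subseteq> K" using k1K by blast
    then show "gen_field (k1 \<union> Zfield k k1 G H \<iota> \<mu> \<tau> \<zeta>) \<subseteq> K"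
      by (rule gen_field_min[OF sK])
    have "k1 \<union> {\<zeta>} \<subseteq> gen_field (k1 \<union> Zfield k k1 G H \<iota> \<mu> \<tau> \<zeta>)"
      using zeta_in gen_field_sub[of "k1 \<union> Zfield k k1 G H \<iota> \<mu> \<tau> \<zeta>"] by blast
    then show "K \<subseteq> gen_field (k1 \<union> Zfield k k1 G H \<iota> \<mu> \<tau> \<zeta>)"
      by (rule gen_field_min[OF gen_field_sf])
  qed
qed


end
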